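(* Let $\mathcal{H}\subset\mathbf{P}^3$ be the hyperbolic quadric over $\mathbf{F}_q$ with equation $x_0x_3-x_1x_2=0$, let $1\le s<q$, and let $X=\mathcal{H}\cap\mathcal{S}$ where $\mathcal{S}\subset\mathbf{P}^3$ is a surface of degree $s$ defined over $\mathbf{F}_q$ which does not contain $\mathcal{H}$. Then $$\sharp X(\mathbf{F}_q)\le 2s(q+1)-s^2,$$ and equality holds if and only if $X$ is (set-theoretically) the union of $s$ lines $\phi_s(\{a_1\}\times\mathbf{P}^1),\dots,\phi_s(\{a_s\}\times\mathbf{P}^1)$ and $s$ lines $\phi_s(\mathbf{P}^1\times\{b_1\}),\dots,\phi_s(\mathbf{P}^1\times\{b_s\})$, where $a_1,\dots,a_s$ are distinct points of $\mathbf{P}^1(\mathbf{F}_q)$ and $b_1,\dots,b_s$ are distinct points of $\mathbf{P}^1(\mathbf{F}_q)$.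
   Context: $\phi_s:\mathbf{P}^1\times\mathbf{P}^1\to\mathbf{P}^3$ is the Segre embedding $((u_0:v_0),(u_1:v_1))\mapsto(u_0u_1:u_0v_1:v_0u_1:v_0v_1)$, whose image is $\mathcal{H}$. $X(\mathbf{F}_q)$ denotes the set of $\mathbf{F}_q$-rational points of $X$. *)

theory Defs
  imports "HOL-Algebra.Algebraic_Closure_Type"
begin

type_synonym 'b pt4 = "'b \<times> 'b \<times> 'b \<times> 'b"
type_synonym expo = "nat \<times> nat \<times> nat \<times> nat"

definition mono_exps :: "nat \<Rightarrow> expo set" where
  "mono_exps s = {(i,j,k,l). i + j + k + l = s}"

text \<open>Evaluation of the homogeneous form of degree s with coefficients c (in the field 'a)
  at a point of 'b^4, where 'b is a field receiving 'a via the embedding f.\<close>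
definition hform_eval :: "('a \<Rightarrow> 'b::field) \<Rightarrow> nat \<Rightarrow> (expo \<Rightarrow> 'a) \<Rightarrow> 'b pt4 \<Rightarrow> 'b" where
  "hform_eval f s c x = (case x of (x0,x1,x2,x3) \<Rightarrow>
     (\<Sum>(i,j,k,l)\<in>mono_exps s. f (c (i,j,k,l)) * x0^i * x1^j * x2^k * x3^l))"

text \<open>Projective points: classes of nonzero vectors up to nonzero scalars.\<close>
definition proj3 :: "'b::field pt4 \<Rightarrow> 'b pt4 set" where
  "proj3 v = (case v of (a,b,c,d) \<Rightarrow> {(t*a,t*b,t*c,t*d) | t. t \<noteq> 0})"

definition proj1 :: "'b::field \<times> 'b \<Rightarrow> ('b \<times> 'b) set" where
  "proj1 v = (case v of (a,b) \<Rightarrow> {(t*a,t*b) | t. t \<noteq> 0})"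

definition P1 :: "('b::field \<times> 'b) set set" where
  "P1 = {proj1 v | v. v \<noteq> (0,0)}"

definition on_H :: "'b::field pt4 \<Rightarrow> bool" where
  "on_H v = (case v of (x0,x1,x2,x3) \<Rightarrow> x0*x3 - x1*x2 = 0)"

definition H_pts :: "'b::field pt4 set set" where
  "H_pts = {proj3 v | v. v \<noteq> (0,0,0,0) \<and> on_H v}"

definition S_pts :: "('a \<Rightarrow> 'b::field) \<Rightarrow> nat \<Rightarrow> (expo \<Rightarrow> 'a) \<Rightarrow> 'b pt4 set set" where
  "S_pts f s c = {proj3 v | v. v \<noteq> (0,0,0,0) \<and> hform_eval f s c v = 0}"

definition X_pts :: "('a \<Rightarrow> 'b::field) \<Rightarrow> nat \<Rightarrow> (expo \<Rightarrow> 'a) \<Rightarrow> 'b pt4 set set" where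
  "X_pts f s c = {proj3 v | v. v \<noteq> (0,0,0,0) \<and> on_H v \<and> hform_eval f s c v = 0}"

definition segre :: "'b::field \<times> 'b \<Rightarrow> 'b \<times> 'b \<Rightarrow> 'b pt4" where
  "segre p r = (case p of (u0,v0) \<Rightarrow> case r of (u1,v1) \<Rightarrow> (u0*u1, u0*v1, v0*u1, v0*v1))"

text \<open>Geometric points (over the algebraic closure of 'a) of the lines
  phi_s({a} x P^1) and phi_s(P^1 x {b}), for a, b in P^1('a).\<close>
definition line1 :: "('a::field \<times> 'a) set \<Rightarrow> 'a alg_closure pt4 set set" where
  "line1 a = {proj3 (segre (to_ac a0, to_ac a1) w) | a0 a1 w. (a0,a1) \<in> a \<and> w \<noteq> (0,0)}"

definition line2 :: "('a::field \<times> 'a) set \<Rightarrow> 'a alg_closure pt4 set set" where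
  "line2 b = {proj3 (segre w (to_ac b0, to_ac b1)) | b0 b1 w. (b0,b1) \<in> b \<and> w \<noteq> (0,0)}"

end

theory Submission
  imports Defs "HOL-Computational_Algebra.Polynomial"
begin


definition NS :: "('b::field \<times> 'b) set" where "NS = insert (0,1) (range (\<lambda>x. (1,x)))"

definition bform :: "nat \<Rightarrow> (nat \<Rightarrow> 'b::field) \<Rightarrow> 'b \<times> 'b \<Rightarrow> 'b" where
  "bform s g x = (case x of (u,v) \<Rightarrow> \<Sum>k\<le>s. g k * u^(s-k) * v^k)"

lemma bf_roots:
  fixes g :: "nat \<Rightarrow> 'b::field"
  assumes "\<exists>k\<le>s. g k \<noteq> 0"
  shows "finite {x\<in>NS. bform s g x = 0} \<and> card {x\<in>NS. bform s g x = 0} \<le> s"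
proof -
  define P where "P = (\<Sum>k\<le>s. monom (g k) k)"
  have cP: "coeff P i = (if i \<le> s then g i else 0)" for i
    unfolding P_def by (simp add: coeff_sum coeff_monom)
  have P0: "P \<noteq> 0" using assms cP by (metis coeff_0)
  have pP: "poly P y = bform s g (1,y)" for y
    unfolding P_def bform_def by (simp add: poly_sum poly_monom mult.commute)
  have at01: "bform s g (0,1) = g s"
  proof -
    have "bform s g (0,1) = (\<Sum>k\<le>s. if k = s then g k else 0)"
      unfolding bform_def prod.case by (intro sum.cong) (auto simp: power_0_left)
    thus ?thesis by simp
  qed
  have fr: "finite {y. poly P y = 0}" using P0 poly_roots_finite by blast
  have cr: "card {y. poly P y = 0} \<le> degree P" using P0 card_poly_roots_bound by blast
  have dP: "degree P \<le> s" by (rule degree_le) (simp add: cP)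
  have eq: "{x\<in>NS. bform s g x = 0} = (if g s = 0 then {(0,1)} else {}) \<union> (\<lambda>y. (1,y)) ` {y. poly P y = 0}"
    unfolding NS_def using at01 pP by auto
  have fin: "finite {x\<in>NS. bform s g x = 0}" unfolding eq using fr by simp
  have ci: "card ((\<lambda>y. (1::'b,y)) ` {y. poly P y = 0}) \<le> card {y. poly P y = 0}"
    by (rule card_image_le[OF fr])
  show ?thesis
  proof (cases "g s = 0")
    case False
    thus ?thesis using fin eq ci cr dP by simp
  next
    case True
    have "s \<noteq> 0" using assms True by (metis le_zero_eq)
    have "degree P \<le> s - 1"
    proof (rule degree_le, intro allI impI)
      fix i assume "s - 1 < i"
      then have "i \<le> s \<Longrightarrow> i = s" by arith
      thus "coeff P i = 0" using True cP by auto
    qed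
    have "card {x\<in>NS. bform s g x = 0} \<le> card {(0::'b,1::'b)} + card ((\<lambda>y. (1::'b,y)) ` {y. poly P y = 0})"
      unfolding eq using True fr by (simp add: card_insert_if)
    thus ?thesis using fin ci cr \<open>degree P \<le> s - 1\<close> \<open>s \<noteq> 0\<close> by simp
  qed
qed

lemma bf_zero:
  fixes g :: "nat \<Rightarrow> 'b::field"
  assumes "Z \<subseteq> NS" "finite Z" "\<forall>x\<in>Z. bform s g x = 0" "card Z > s"
  shows "\<forall>k\<le>s. g k = 0"
proof (rule ccontr)
  assume "\<not> ?thesis"
  then have "finite {x\<in>NS. bform s g x = 0} \<and> card {x\<in>NS. bform s g x = 0} \<le> s"
    using bf_roots by blast
  moreover have "Z \<subseteq> {x\<in>NS. bform s g x = 0}" using assms by auto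
  ultimately have "card Z \<le> s" by (meson card_mono order_trans)
  thus False using assms by simp
qed




lemma card_Z_sum:
  assumes "finite N"
  shows "card {(p,r). p\<in>N \<and> r\<in>N \<and> R p r} = (\<Sum>p\<in>N. card {r\<in>N. R p r})"
proof -
  have "{(p,r). p\<in>N \<and> r\<in>N \<and> R p r} = Sigma N (\<lambda>p. {r\<in>N. R p r})" by auto
  thus ?thesis using assms by (simp add: card_SigmaI)
qed

lemma arith_key:
  fixes v s n :: nat
  assumes "v \<le> s" "s < n"
  shows "v*n + (n-v)*s \<le> s*n + (n-s)*s \<and> (v*n + (n-v)*s = s*n + (n-s)*s \<longrightarrow> v = s)"
proof -
  obtain d where d: "s = v + d" using assms le_Suc_ex by blast
  have "n - v = (n-s) + d" using assms d by arith
  then have e1: "(n-v)*s = (n-s)*s + d*s" by (simp add: add_mult_distrib)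
  have e2: "s*n = v*n + d*n" using d by (simp add: algebra_simps)
  have "d*s \<le> d*n" using assms by simp
  moreover have "d > 0 \<Longrightarrow> d*s < d*n" using assms by simp
  ultimately show ?thesis using e1 e2 d by auto
qed

lemma count_abs:
  assumes fin: "finite N" and sn: "s < card N"
    and P1: "\<forall>p\<in>N. (\<forall>r\<in>N. R p r) \<or> card {r\<in>N. R p r} \<le> s"
    and P2: "card {p\<in>N. \<forall>r\<in>N. R p r} \<le> s"
  shows "card {(p,r). p\<in>N \<and> r\<in>N \<and> R p r} \<le> s*card N + (card N - s)*s \<and>
    (card {(p,r). p\<in>N \<and> r\<in>N \<and> R p r} = s*card N + (card N - s)*s \<longrightarrow> card {p\<in>N. \<forall>r\<in>N. R p r} = s)"
proof -
  define V where "V = {p\<in>N. \<forall>r\<in>N. R p r}"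
  have VN: "V \<subseteq> N" unfolding V_def by auto
  have fV: "finite V" using VN fin finite_subset by blast
  have s1: "(\<Sum>p\<in>V. card {r\<in>N. R p r}) = card V * card N"
  proof -
    have "(\<Sum>p\<in>V. card {r\<in>N. R p r}) = (\<Sum>p\<in>V. card N)"
      by (intro sum.cong) (auto simp: V_def intro!: arg_cong[where f=card])
    thus ?thesis by simp
  qed
  have s2: "(\<Sum>p\<in>N-V. card {r\<in>N. R p r}) \<le> (\<Sum>p\<in>N-V. s)"
    by (intro sum_mono) (use P1 in \<open>auto simp: V_def\<close>)
  have cNV: "card (N - V) = card N - card V" using VN fV by (simp add: card_Diff_subset)
  have tot: "(\<Sum>p\<in>N. card {r\<in>N. R p r}) = (\<Sum>p\<in>V. card {r\<in>N. R p r}) + (\<Sum>p\<in>N-V. card {r\<in>N. R p r})"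
    using VN fin by (metis (no_types, lifting) add.commute sum.subset_diff)
  have le: "card {(p,r). p\<in>N \<and> r\<in>N \<and> R p r} \<le> card V * card N + (card N - card V) * s"
    using card_Z_sum[OF fin] tot s1 s2 cNV by (simp add: mult.commute)
  have "card V \<le> s" using P2 V_def by simp
  from arith_key[OF this sn] le show ?thesis unfolding V_def[symmetric] by linarith
qed

lemma count_low:
  assumes fin: "finite N" and WN: "W \<subseteq> N" and W: "\<forall>r\<in>W. \<forall>p\<in>N. R p r"
  shows "card {p\<in>N. \<forall>r\<in>N. R p r} * card N + (card N - card {p\<in>N. \<forall>r\<in>N. R p r}) * card W
     \<le> card {(p,r). p\<in>N \<and> r\<in>N \<and> R p r}"
proof -
  define V where "V = {p\<in>N. \<forall>r\<in>N. R p r}"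
  have VN: "V \<subseteq> N" unfolding V_def by auto
  have fV: "finite V" using VN fin finite_subset by blast
  have s1: "(\<Sum>p\<in>V. card {r\<in>N. R p r}) = card V * card N"
  proof -
    have "(\<Sum>p\<in>V. card {r\<in>N. R p r}) = (\<Sum>p\<in>V. card N)"
      by (intro sum.cong) (auto simp: V_def intro!: arg_cong[where f=card])
    thus ?thesis by simp
  qed
  have s2: "(\<Sum>p\<in>N-V. card W) \<le> (\<Sum>p\<in>N-V. card {r\<in>N. R p r})"
    by (intro sum_mono card_mono) (use W WN fin in auto)
  have cNV: "card (N - V) = card N - card V" using VN fV by (simp add: card_Diff_subset)
  have tot: "(\<Sum>p\<in>N. card {r\<in>N. R p r}) = (\<Sum>p\<in>V. card {r\<in>N. R p r}) + (\<Sum>p\<in>N-V. card {r\<in>N. R p r})"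
    using VN fin by (metis (no_types, lifting) add.commute sum.subset_diff)
  show ?thesis unfolding V_def[symmetric]
    using card_Z_sum[OF fin] tot s1 s2 cNV by (simp add: mult.commute)
qed




lemma finite_mono_exps: "finite (mono_exps s)"
proof -
  have "mono_exps s \<subseteq> {..s} \<times> {..s} \<times> {..s} \<times> {..s}" unfolding mono_exps_def by auto
  thus ?thesis by (rule finite_subset) auto
qed

lemma regroup:
  fixes w :: "'e \<Rightarrow> 'b::field"
  assumes "finite E" "\<forall>e\<in>E. m e \<le> s"
  shows "(\<Sum>e\<in>E. w e * u^(s - m e) * v^(m e)) = bform s (\<lambda>k. \<Sum>e\<in>{e\<in>E. m e = k}. w e) (u,v)"
proof -
  have "bform s (\<lambda>k. \<Sum>e\<in>{e\<in>E. m e = k}. w e) (u,v) =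
      (\<Sum>k\<le>s. \<Sum>e\<in>{e\<in>E. m e = k}. w e * u^(s - m e) * v^(m e))"
    unfolding bform_def prod.case by (intro sum.cong refl) (auto simp: sum_distrib_right)
  also have "\<dots> = (\<Sum>e\<in>E. w e * u^(s - m e) * v^(m e))"
    by (rule sum.group) (use assms in auto)
  finally show ?thesis by simp
qed

definition m1 :: "expo \<Rightarrow> nat" where "m1 e = (case e of (i,j,k,l) \<Rightarrow> j+l)"
definition m2 :: "expo \<Rightarrow> nat" where "m2 e = (case e of (i,j,k,l) \<Rightarrow> k+l)"
definition w1 :: "('a \<Rightarrow> 'b::field) \<Rightarrow> (expo \<Rightarrow> 'a) \<Rightarrow> 'b \<times> 'b \<Rightarrow> expo \<Rightarrow> 'b" where
  "w1 f c p e = (case e of (i,j,k,l) \<Rightarrow> f (c e) * fst p^(i+j) * snd p^(k+l))"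
definition w2 :: "('a \<Rightarrow> 'b::field) \<Rightarrow> (expo \<Rightarrow> 'a) \<Rightarrow> 'b \<times> 'b \<Rightarrow> expo \<Rightarrow> 'b" where
  "w2 f c r e = (case e of (i,j,k,l) \<Rightarrow> f (c e) * fst r^(i+k) * snd r^(j+l))"
definition cf1 where "cf1 f s c p k = (\<Sum>e\<in>{e\<in>mono_exps s. m1 e = k}. w1 f c p e)"
definition cf2 where "cf2 f s c r k = (\<Sum>e\<in>{e\<in>mono_exps s. m2 e = k}. w2 f c r e)"

lemma exp1: "hform_eval f s c (segre p r) = bform s (cf1 f s c p) r"
proof -
  obtain p0 p1 where p: "p = (p0,p1)" by fastforce
  obtain u v where r: "r = (u,v)" by fastforce
  have "hform_eval f s c (segre p r) = (\<Sum>e\<in>mono_exps s. w1 f c p e * u^(s - m1 e) * v^(m1 e))"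
    unfolding hform_eval_def segre_def p r prod.case
  proof (intro sum.cong refl)
    fix e assume "e \<in> mono_exps s"
    then obtain i j k l where e: "e = (i,j,k,l)" "i+j+k+l = s" unfolding mono_exps_def by auto
    have "s - (j+l) = i + k" using e by simp
    thus "(case e of (i, j, k, l) \<Rightarrow> f (c (i, j, k, l)) * (p0 * u) ^ i * (p0 * v) ^ j * (p1 * u) ^ k * (p1 * v) ^ l)
       = w1 f c (p0, p1) e * u ^ (s - m1 e) * v ^ m1 e"
      unfolding e w1_def m1_def by (simp add: power_mult_distrib power_add mult_ac)
  qed
  also have "\<dots> = bform s (cf1 f s c p) r"
    unfolding cf1_def r by (rule regroup[OF finite_mono_exps]) (auto simp: mono_exps_def m1_def)
  finally show ?thesis .
qed

lemma exp2: "hform_eval f s c (segre p r) = bform s (cf2 f s c r) p"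
proof -
  obtain r0 r1 where r: "r = (r0,r1)" by fastforce
  obtain u v where p: "p = (u,v)" by fastforce
  have "hform_eval f s c (segre p r) = (\<Sum>e\<in>mono_exps s. w2 f c r e * u^(s - m2 e) * v^(m2 e))"
    unfolding hform_eval_def segre_def p r prod.case
  proof (intro sum.cong refl)
    fix e assume "e \<in> mono_exps s"
    then obtain i j k l where e: "e = (i,j,k,l)" "i+j+k+l = s" unfolding mono_exps_def by auto
    have "s - (k+l) = i + j" using e by simp
    thus "(case e of (i, j, k, l) \<Rightarrow> f (c (i, j, k, l)) * (u * r0) ^ i * (u * r1) ^ j * (v * r0) ^ k * (v * r1) ^ l)
       = w2 f c (r0, r1) e * u ^ (s - m2 e) * v ^ m2 e"
      unfolding e w2_def m2_def by (simp add: power_mult_distrib power_add mult_ac)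
  qed
  also have "\<dots> = bform s (cf2 f s c r) p"
    unfolding cf2_def p by (rule regroup[OF finite_mono_exps]) (auto simp: mono_exps_def m2_def)
  finally show ?thesis .
qed

definition ac2 :: "'a::field \<times> 'a \<Rightarrow> 'a alg_closure \<times> 'a alg_closure" where
  "ac2 p = (to_ac (fst p), to_ac (snd p))"

lemma cf1_ac: "cf1 to_ac s c (ac2 p) k = to_ac (cf1 id s c p k)"
  unfolding cf1_def w1_def ac2_def by (simp add: to_ac_sum, intro sum.cong refl) (auto split: prod.split)

lemma cf2_ac: "cf2 to_ac s c (ac2 p) k = to_ac (cf2 id s c p k)"
  unfolding cf2_def w2_def ac2_def by (simp add: to_ac_sum, intro sum.cong refl) (auto split: prod.split)

definition sm3 :: "'b::field \<Rightarrow> 'b pt4 \<Rightarrow> 'b pt4" where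
  "sm3 t v = (case v of (a,b,c,d) \<Rightarrow> (t*a,t*b,t*c,t*d))"

lemma hform_sm3: "hform_eval f s c (sm3 t v) = t^s * hform_eval f s c v"
proof -
  obtain a b c' d where v: "v = (a,b,c',d)" by (cases v) auto
  show ?thesis unfolding hform_eval_def sm3_def v prod.case sum_distrib_left
  proof (intro sum.cong refl)
    fix e assume "e \<in> mono_exps s"
    then obtain i j k l where e: "e = (i,j,k,l)" "i+j+k+l = s" unfolding mono_exps_def by auto
    have "t^s = t^i*t^j*t^k*t^l" using e by (simp add: power_add[symmetric])
    thus "(case e of (i, j, k, l) \<Rightarrow> f (c (i, j, k, l)) * (t * a) ^ i * (t * b) ^ j * (t * c') ^ k * (t * d) ^ l) =
         t ^ s * (case e of (i, j, k, l) \<Rightarrow> f (c (i, j, k, l)) * a ^ i * b ^ j * c' ^ k * d ^ l)"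
      unfolding e by (simp add: power_mult_distrib mult_ac)
  qed
qed




lemma proj3_self: "v \<in> proj3 v"
proof -
  obtain a b c d where "v = (a,b,c,d)" by (cases v) auto
  thus ?thesis unfolding proj3_def by (auto intro!: exI[of _ 1])
qed

lemma proj3_memD: "w \<in> proj3 v \<Longrightarrow> \<exists>t. t \<noteq> 0 \<and> w = sm3 t v"
  unfolding proj3_def sm3_def by (auto split: prod.splits)

lemma proj3_sm3: assumes "t \<noteq> 0" shows "proj3 (sm3 t v) = proj3 v"
proof -
  obtain a b c d where v: "v = (a,b,c,d)" by (cases v) auto
  show ?thesis unfolding proj3_def sm3_def v prod.case
  proof (intro equalityI subsetI)
    fix x assume "x \<in> {(u * (t * a), u * (t * b), u * (t * c), u * (t * d)) |u. u \<noteq> 0}"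
    then obtain u where "u \<noteq> 0" "x = (u * (t * a), u * (t * b), u * (t * c), u * (t * d))" by blast
    thus "x \<in> {(u * a, u * b, u * c, u * d) |u. u \<noteq> 0}" using assms
      by (auto intro!: exI[of _ "u*t"] simp: mult_ac)
  next
    fix x assume "x \<in> {(u * a, u * b, u * c, u * d) |u. u \<noteq> 0}"
    then obtain u where "u \<noteq> 0" "x = (u * a, u * b, u * c, u * d)" by blast
    thus "x \<in> {(u * (t * a), u * (t * b), u * (t * c), u * (t * d)) |u. u \<noteq> 0}" using assms
      by (auto intro!: exI[of _ "u/t"])
  qed
qed

lemma proj3_eqD: "proj3 v = proj3 w \<Longrightarrow> \<exists>t. t \<noteq> 0 \<and> w = sm3 t v"
  using proj3_self[of w] proj3_memD by blast

lemma hform_proj3: "proj3 v = proj3 w \<Longrightarrow> hform_eval f s c v = 0 \<Longrightarrow> hform_eval f s c w = 0"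
proof -
  assume a: "proj3 v = proj3 w" "hform_eval f s c v = 0"
  then obtain t where "w = sm3 t v" using proj3_eqD by blast
  thus ?thesis using a(2) by (metis hform_sm3 mult_zero_right)
qed

lemma segre_nz: "p \<noteq> (0,0) \<Longrightarrow> r \<noteq> (0,0) \<Longrightarrow> segre p r \<noteq> (0,0,0,0)"
  unfolding segre_def by (auto split: prod.splits)

lemma segre_H: "on_H (segre p r)"
  unfolding segre_def on_H_def by (auto split: prod.splits simp: mult_ac)

lemma NS_nz: "p \<in> NS \<Longrightarrow> p \<noteq> (0,0)"
  unfolding NS_def by auto

lemma segre_sm1: "segre (t*a0, t*a1) w = sm3 t (segre (a0,a1) w)"
  unfolding segre_def sm3_def by (auto split: prod.splits simp: mult_ac)

lemma H_decomp:
  fixes v :: "'b::field pt4"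
  assumes "v \<noteq> (0,0,0,0)" "on_H v"
  shows "\<exists>p\<in>NS. \<exists>r\<in>NS. \<exists>t. t \<noteq> 0 \<and> v = sm3 t (segre p r)"
proof -
  obtain x0 x1 x2 x3 where v: "v = (x0,x1,x2,x3)" by (cases v) auto
  have h: "x0*x3 = x1*x2" using assms(2) unfolding v on_H_def by simp
  show ?thesis
  proof (cases "x0 = 0")
    case False
    have "v = sm3 x0 (segre (1, x2/x0) (1, x1/x0))"
      unfolding v sm3_def segre_def using False h
      by (auto simp: field_simps)
    thus ?thesis using False unfolding NS_def by blast
  next
    case x0: True
    show ?thesis
    proof (cases "x1 = 0")
      case False
      then have "x2 = 0" using h x0 by simp
      have "v = sm3 x1 (segre (1, x3/x1) (0,1))"
        unfolding v sm3_def segre_def using False x0 \<open>x2 = 0\<close> by auto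
      thus ?thesis using False unfolding NS_def by blast
    next
      case x1: True
      show ?thesis
      proof (cases "x2 = 0")
        case False
        have "v = sm3 x2 (segre (0,1) (1, x3/x2))"
          unfolding v sm3_def segre_def using False x0 x1 by auto
        thus ?thesis using False unfolding NS_def by blast
      next
        case True
        then have "x3 \<noteq> 0" using assms(1) x0 x1 v by auto
        have "v = sm3 x3 (segre (0,1) (0,1))"
          unfolding v sm3_def segre_def using True x0 x1 by auto
        thus ?thesis using \<open>x3 \<noteq> 0\<close> unfolding NS_def by blast
      qed
    qed
  qed
qed

lemma segre_inj:
  assumes "p \<in> NS" "r \<in> NS" "p' \<in> NS" "r' \<in> NS" "proj3 (segre p r) = proj3 (segre p' r')"
  shows "p = p' \<and> r = r'"
proof -
  obtain t where t: "t \<noteq> 0" "segre p' r' = sm3 t (segre p r)" using proj3_eqD[OF assms(5)] by blast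
  show ?thesis using assms(1-4) t unfolding NS_def segre_def sm3_def by auto
qed




lemma X_char: "X_pts f s c = (\<lambda>(p,r). proj3 (segre p r)) ` {(p,r). p\<in>NS \<and> r\<in>NS \<and> hform_eval f s c (segre p r) = 0}"
proof (intro equalityI subsetI)
  fix x assume "x \<in> X_pts f s c"
  then obtain v where v: "x = proj3 v" "v \<noteq> (0,0,0,0)" "on_H v" "hform_eval f s c v = 0"
    unfolding X_pts_def by blast
  obtain p r t where pr: "p\<in>NS" "r\<in>NS" "t \<noteq> 0" "v = sm3 t (segre p r)" using H_decomp[OF v(2,3)] by blast
  have x: "x = proj3 (segre p r)" using v(1) pr proj3_sm3 by simp
  have "hform_eval f s c (segre p r) = 0" using hform_proj3[of v "segre p r"] x v by simp
  thus "x \<in> (\<lambda>(p,r). proj3 (segre p r)) ` {(p,r). p\<in>NS \<and> r\<in>NS \<and> hform_eval f s c (segre p r) = 0}"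
    using x pr by auto
next
  fix x assume "x \<in> (\<lambda>(p,r). proj3 (segre p r)) ` {(p,r). p\<in>NS \<and> r\<in>NS \<and> hform_eval f s c (segre p r) = 0}"
  then obtain p r where "p\<in>NS" "r\<in>NS" "hform_eval f s c (segre p r) = 0" "x = proj3 (segre p r)" by auto
  thus "x \<in> X_pts f s c" unfolding X_pts_def using segre_nz NS_nz segre_H by blast
qed

lemma H_char: "H_pts = (\<lambda>(p,r). proj3 (segre p r)) ` (NS \<times> NS)"
proof (intro equalityI subsetI)
  fix x assume "x \<in> (H_pts :: 'b::field pt4 set set)"
  then obtain v where v: "x = proj3 v" "v \<noteq> (0,0,0,0)" "on_H v"
    unfolding H_pts_def by blast
  obtain p r t where pr: "p\<in>NS" "r\<in>NS" "t \<noteq> 0" "v = sm3 t (segre p r)" using H_decomp[OF v(2,3)] by blast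
  have x: "x = proj3 (segre p r)" using v(1) pr proj3_sm3 by simp
  thus "x \<in> (\<lambda>(p,r). proj3 (segre p r)) ` (NS \<times> NS)" using pr by auto
next
  fix x assume "x \<in> (\<lambda>(p,r). proj3 (segre p r)) ` (NS \<times> (NS :: ('b::field \<times> 'b) set))"
  then obtain p r where "p\<in>NS" "r\<in>NS" "x = proj3 (segre p r)" by auto
  thus "x \<in> H_pts" unfolding H_pts_def using segre_nz NS_nz segre_H by blast
qed

lemma S_mem: "w \<noteq> (0,0,0,0) \<Longrightarrow> hform_eval f s c w = 0 \<Longrightarrow> proj3 w \<in> S_pts f s c"
  unfolding S_pts_def by blast

lemma card_X:
  "card (X_pts f s c) = card {(p,r). p\<in>NS \<and> r\<in>NS \<and> hform_eval f s c (segre p r) = 0}"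
  unfolding X_char
proof (rule card_image, rule inj_onI)
  fix x y assume "x \<in> {(p,r). p\<in>NS \<and> r\<in>NS \<and> hform_eval f s c (segre p r) = 0}"
    "y \<in> {(p,r). p\<in>NS \<and> r\<in>NS \<and> hform_eval f s c (segre p r) = 0}"
    "(\<lambda>(p,r). proj3 (segre p r)) x = (\<lambda>(p,r). proj3 (segre p r)) y"
  thus "x = y" using segre_inj[of "fst x" "snd x" "fst y" "snd y"]
    by (simp add: case_prod_beta prod_eq_iff)
qed

lemma NS_finite: "finite (NS :: ('a::{finite,field} \<times> 'a) set)" by simp

lemma card_NS: "card (NS :: ('a::{finite,field} \<times> 'a) set) = card (UNIV::'a set) + 1"
proof -
  have "(0,1) \<notin> range (\<lambda>x::'a. (1::'a,x))" by auto
  moreover have "card (range (\<lambda>x::'a. (1::'a,x))) = card (UNIV::'a set)"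
    by (rule card_image) (auto simp: inj_on_def)
  ultimately show ?thesis unfolding NS_def by simp
qed

lemma proj1_self: "v \<in> proj1 v"
  unfolding proj1_def by (cases v) (auto intro!: exI[of _ 1])

lemma proj1_memD: "w \<in> proj1 v \<Longrightarrow> \<exists>t. t \<noteq> 0 \<and> w = (t*fst v, t*snd v)"
  unfolding proj1_def by (auto split: prod.splits)

lemma proj1_sm: assumes "t \<noteq> 0" shows "proj1 (t*a, t*b) = proj1 (a,b)"
proof (unfold proj1_def prod.case, intro equalityI subsetI)
  fix x assume "x \<in> {(u * (t * a), u * (t * b)) |u. u \<noteq> 0}"
  then obtain u where "u \<noteq> 0" "x = (u * (t * a), u * (t * b))" by blast
  thus "x \<in> {(u * a, u * b) |u. u \<noteq> 0}" using assms by (auto intro!: exI[of _ "u*t"] simp: mult_ac)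
next
  fix x assume "x \<in> {(u * a, u * b) |u. u \<noteq> 0}"
  then obtain u where "u \<noteq> 0" "x = (u*a,u*b)" by blast
  thus "x \<in> {(u * (t * a), u * (t * b)) |u. u \<noteq> 0}" using assms by (auto intro!: exI[of _ "u/t"])
qed

lemma P1_rep: assumes "a \<in> P1" shows "\<exists>n\<in>NS. a = proj1 n"
proof -
  obtain v0 v1 where v: "a = proj1 (v0,v1)" "(v0,v1) \<noteq> (0,0)" using assms unfolding P1_def by auto
  show ?thesis
  proof (cases "v0 = 0")
    case False
    have "proj1 (v0,v1) = proj1 (v0*1, v0*(v1/v0))" using False by simp
    also have "\<dots> = proj1 (1, v1/v0)" using proj1_sm False by blast
    finally show ?thesis using v unfolding NS_def by auto
  next
    case True
    then have "v1 \<noteq> 0" using v by auto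
    have "proj1 (v0,v1) = proj1 (v1*0, v1*1)" using True by simp
    also have "\<dots> = proj1 (0, 1)" using proj1_sm \<open>v1 \<noteq> 0\<close> by blast
    finally show ?thesis using v unfolding NS_def by auto
  qed
qed

lemma NS_P1: "n \<in> NS \<Longrightarrow> proj1 n \<in> P1"
  unfolding P1_def using NS_nz by blast

lemma proj1_inj: "inj_on proj1 NS"
proof (rule inj_onI)
  fix n n' :: "'b::field \<times> 'b" assume a: "n \<in> NS" "n' \<in> NS" "proj1 n = proj1 n'"
  then have "n' \<in> proj1 n" using proj1_self by metis
  then obtain t where "t \<noteq> 0" "n' = (t*fst n, t*snd n)" using proj1_memD by blast
  moreover have "fst n = 0 \<or> fst n = 1" "fst n' = 0 \<or> fst n' = 1" 
    "fst n = 0 \<Longrightarrow> snd n = 1" "fst n' = 0 \<Longrightarrow> snd n' = 1"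
    using a(1,2) unfolding NS_def by auto
  ultimately show "n = n'" by (auto simp: prod_eq_iff)
qed

lemma ac2_NS: "n \<in> NS \<Longrightarrow> ac2 n \<in> NS"
  unfolding NS_def ac2_def by auto

lemma ac2_inj: "inj ac2"
  unfolding inj_def ac2_def by (auto simp: prod_eq_iff)

lemma hform_ac: "hform_eval to_ac s c (segre (ac2 p) (ac2 r)) = to_ac (hform_eval id s c (segre p r))"
  unfolding exp1 bform_def cf1_ac by (simp add: ac2_def to_ac_sum split: prod.splits)





lemma bform_zero: "\<forall>k\<le>s. g k = 0 \<Longrightarrow> bform s g x = 0"
  unfolding bform_def by (auto split: prod.splits)

lemma bound_int: "s < q+1 \<Longrightarrow> int (s*(q+1) + (q+1-s)*s) = 2*int s*(int q+1) - int s^2"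
proof -
  assume a: "s < q+1"
  have "int (q+1-s) = int q + 1 - int s" using a by (simp add: of_nat_diff)
  then have "int (s*(q+1) + (q+1-s)*s) = int s * (int q + 1) + (int q + 1 - int s) * int s"
    by (simp only: of_nat_add of_nat_mult) simp
  thus ?thesis by (simp add: power2_eq_square algebra_simps)
qed

lemma segre_sm2: "segre w (t*b0, t*b1) = sm3 t (segre w (b0,b1))"
  unfolding segre_def sm3_def by (auto split: prod.splits simp: mult_ac)

context
  fixes c :: "expo \<Rightarrow> 'a::{field,finite}" and s :: nat
  assumes sq: "s < card (UNIV :: 'a set)"
begin

lemma sNS: "s < card (NS :: ('a \<times> 'a) set)" using sq card_NS[where 'a='a] by simp

lemma LV: assumes "a \<in> NS" "\<forall>r\<in>NS. hform_eval id s c (segre a r) = 0"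
  shows "hform_eval to_ac s c (segre (ac2 a) r) = 0"
proof -
  have "\<forall>k\<le>s. cf1 id s c a k = 0"
    by (rule bf_zero[of NS]) (use assms sNS in \<open>auto simp: exp1\<close>)
  thus ?thesis unfolding exp1 by (intro bform_zero) (simp add: cf1_ac)
qed

lemma LW: assumes "b \<in> NS" "\<forall>p\<in>NS. hform_eval id s c (segre p b) = 0"
  shows "hform_eval to_ac s c (segre p (ac2 b)) = 0"
proof -
  have "\<forall>k\<le>s. cf2 id s c b k = 0"
    by (rule bf_zero[of NS]) (use assms sNS in \<open>auto simp: exp2\<close>)
  thus ?thesis unfolding exp2 by (intro bform_zero) (simp add: cf2_ac)
qed

lemma LV': assumes "\<exists>r\<in>NS. hform_eval id s c (segre a r) \<noteq> 0"
  shows "\<exists>k\<le>s. cf1 to_ac s c (ac2 a) k \<noteq> 0"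
proof (rule ccontr)
  assume "\<not> ?thesis"
  then have "\<forall>k\<le>s. cf1 id s c a k = 0" by (simp add: cf1_ac)
  then have "bform s (cf1 id s c a) r = 0" for r by (rule bform_zero)
  thus False using assms by (simp add: exp1)
qed

lemma LW': assumes "\<exists>p\<in>NS. hform_eval id s c (segre p b) \<noteq> 0"
  shows "\<exists>k\<le>s. cf2 to_ac s c (ac2 b) k \<noteq> 0"
proof (rule ccontr)
  assume "\<not> ?thesis"
  then have "\<forall>k\<le>s. cf2 id s c b k = 0" by (simp add: cf2_ac)
  then have "bform s (cf2 id s c b) p = 0" for p by (rule bform_zero)
  thus False using assms by (simp add: exp2)
qed

lemma PP1: "p \<in> NS \<Longrightarrow> (\<forall>r\<in>NS. hform_eval id s c (segre p r) = 0) \<or>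
   card {r\<in>NS. hform_eval id s c (segre p r) = 0} \<le> s"
proof (cases "\<exists>k\<le>s. cf1 id s c p k \<noteq> 0")
  case True thus ?thesis using bf_roots[OF True] by (simp add: exp1)
next
  case False 
  then have "bform s (cf1 id s c p) r = 0" for r by (intro bform_zero) auto
  thus ?thesis by (simp add: exp1)
qed

lemma PP1': "r \<in> NS \<Longrightarrow> (\<forall>p\<in>NS. hform_eval id s c (segre p r) = 0) \<or>
   card {p\<in>NS. hform_eval id s c (segre p r) = 0} \<le> s"
proof (cases "\<exists>k\<le>s. cf2 id s c r k \<noteq> 0")
  case True thus ?thesis using bf_roots[OF True] by (simp add: exp2)
next
  case False 
  then have "bform s (cf2 id s c r) p = 0" for p by (intro bform_zero) auto
  thus ?thesis by (simp add: exp2)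
qed

lemma allzero_HS:
  assumes "\<forall>p\<in>NS. \<forall>r\<in>NS. hform_eval to_ac s c (segre p r) = 0"
  shows "(H_pts :: 'a alg_closure pt4 set set) \<subseteq> S_pts to_ac s c"
proof
  fix x :: "'a alg_closure pt4 set" assume "x \<in> H_pts"
  then obtain p r where "p \<in> NS" "r \<in> NS" "x = proj3 (segre p r)" unfolding H_char by auto
  thus "x \<in> S_pts to_ac s c" using assms S_mem segre_nz NS_nz by metis
qed

lemma PP2: assumes "\<not> ((H_pts :: 'a alg_closure pt4 set set) \<subseteq> S_pts to_ac s c)"
  shows "card {p\<in>NS. \<forall>r\<in>NS. hform_eval id s c (segre p r) = 0} \<le> s"
proof (rule ccontr)
  define V where "V = {p\<in>NS. \<forall>r\<in>NS. hform_eval id s c (segre p r) = 0}"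
  assume "\<not> ?thesis"
  then have cV: "card V > s" unfolding V_def by simp
  have "\<forall>p\<in>NS. \<forall>r\<in>NS. hform_eval to_ac s c (segre p r) = 0"
  proof (intro ballI)
    fix p r :: "'a alg_closure \<times> 'a alg_closure" assume "p \<in> NS" "r \<in> NS"
    have "\<forall>k\<le>s. cf2 to_ac s c r k = 0"
    proof (rule bf_zero[of "ac2 ` V"])
      show "ac2 ` V \<subseteq> NS" using ac2_NS V_def by auto
      show "finite (ac2 ` V)" by simp
      show "\<forall>x\<in>ac2 ` V. bform s (cf2 to_ac s c r) x = 0"
        using LV unfolding V_def by (auto simp: exp2[symmetric])
      have "card (ac2 ` V) = card V" by (rule card_image) (meson ac2_inj inj_on_subset subset_UNIV)
      thus "s < card (ac2 ` V)" using cV by simp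
    qed
    thus "hform_eval to_ac s c (segre p r) = 0" unfolding exp2 by (rule bform_zero)
  qed
  thus False using assms allzero_HS by blast
qed

lemma PP2': assumes "\<not> ((H_pts :: 'a alg_closure pt4 set set) \<subseteq> S_pts to_ac s c)"
  shows "card {r\<in>NS. \<forall>p\<in>NS. hform_eval id s c (segre p r) = 0} \<le> s"
proof (rule ccontr)
  define W where "W = {r\<in>NS. \<forall>p\<in>NS. hform_eval id s c (segre p r) = 0}"
  assume "\<not> ?thesis"
  then have cW: "card W > s" unfolding W_def by simp
  have "\<forall>p\<in>NS. \<forall>r\<in>NS. hform_eval to_ac s c (segre p r) = 0"
  proof (intro ballI)
    fix p r :: "'a alg_closure \<times> 'a alg_closure" assume "p \<in> NS" "r \<in> NS"
    have "\<forall>k\<le>s. cf1 to_ac s c p k = 0"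
    proof (rule bf_zero[of "ac2 ` W"])
      show "ac2 ` W \<subseteq> NS" using ac2_NS W_def by auto
      show "finite (ac2 ` W)" by simp
      show "\<forall>x\<in>ac2 ` W. bform s (cf1 to_ac s c p) x = 0"
        using LW unfolding W_def by (auto simp: exp1[symmetric])
      have "card (ac2 ` W) = card W" by (rule card_image) (meson ac2_inj inj_on_subset subset_UNIV)
      thus "s < card (ac2 ` W)" using cW by simp
    qed
    thus "hform_eval to_ac s c (segre p r) = 0" unfolding exp1 by (rule bform_zero)
  qed
  thus False using assms allzero_HS by blast
qed

lemma line1_sub: assumes "a \<in> NS" "\<forall>r\<in>NS. hform_eval id s c (segre a r) = 0"
  shows "line1 (proj1 a) \<subseteq> X_pts to_ac s c"
proof
  fix y assume "y \<in> line1 (proj1 a)"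
  then obtain a0 a1 w where y: "y = proj3 (segre (to_ac a0, to_ac a1) w)" "(a0,a1) \<in> proj1 a" "w \<noteq> (0,0)"
    unfolding line1_def by blast
  obtain t where t: "t \<noteq> 0" "(a0,a1) = (t*fst a, t*snd a)" using proj1_memD[OF y(2)] by blast
  have e: "segre (to_ac a0, to_ac a1) w = sm3 (to_ac t) (segre (ac2 a) w)"
    using t segre_sm1[of "to_ac t" "to_ac (fst a)" "to_ac (snd a)" w] by (simp add: ac2_def)
  have F0: "hform_eval to_ac s c (segre (to_ac a0, to_ac a1) w) = 0"
    unfolding e hform_sm3 using LV[OF assms] by simp
  have nz: "(to_ac a0, to_ac a1) \<noteq> (0,0)" using t NS_nz[OF assms(1)] by (auto simp: prod_eq_iff)
  show "y \<in> X_pts to_ac s c" unfolding X_pts_def using y(1) F0 segre_nz[OF nz y(3)] segre_H by blast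
qed

lemma line2_sub: assumes "b \<in> NS" "\<forall>p\<in>NS. hform_eval id s c (segre p b) = 0"
  shows "line2 (proj1 b) \<subseteq> X_pts to_ac s c"
proof
  fix y assume "y \<in> line2 (proj1 b)"
  then obtain b0 b1 w where y: "y = proj3 (segre w (to_ac b0, to_ac b1))" "(b0,b1) \<in> proj1 b" "w \<noteq> (0,0)"
    unfolding line2_def by blast
  obtain t where t: "t \<noteq> 0" "(b0,b1) = (t*fst b, t*snd b)" using proj1_memD[OF y(2)] by blast
  have e: "segre w (to_ac b0, to_ac b1) = sm3 (to_ac t) (segre w (ac2 b))"
    using t segre_sm2[of w "to_ac t" "to_ac (fst b)" "to_ac (snd b)"] by (simp add: ac2_def)
  have F0: "hform_eval to_ac s c (segre w (to_ac b0, to_ac b1)) = 0"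
    unfolding e hform_sm3 using LW[OF assms] by simp
  have nz: "(to_ac b0, to_ac b1) \<noteq> (0,0)" using t NS_nz[OF assms(1)] by (auto simp: prod_eq_iff)
  show "y \<in> X_pts to_ac s c" unfolding X_pts_def using y(1) F0 segre_nz[OF y(3) nz] segre_H by blast
qed

lemma X_zero: assumes "proj3 w \<in> X_pts to_ac s c" shows "hform_eval to_ac s c w = 0"
proof -
  obtain v where "proj3 w = proj3 v" "hform_eval to_ac s c v = 0" using assms unfolding X_pts_def by blast
  thus ?thesis using hform_proj3[of v w] by simp
qed

lemma line1_rev: assumes "n \<in> NS" "line1 (proj1 n) \<subseteq> X_pts to_ac s c" "r \<in> NS"
  shows "hform_eval id s c (segre n r) = 0"
proof -
  obtain n0 n1 where nn: "n = (n0,n1)" by fastforce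
  have "proj3 (segre (to_ac n0, to_ac n1) (ac2 r)) \<in> line1 (proj1 n)"
    unfolding line1_def using proj1_self[of n] NS_nz[OF ac2_NS[OF assms(3)]] nn by blast
  then have "proj3 (segre (ac2 n) (ac2 r)) \<in> line1 (proj1 n)" using nn by (simp add: ac2_def)
  then have "hform_eval to_ac s c (segre (ac2 n) (ac2 r)) = 0" using assms(2) X_zero by blast
  thus ?thesis by (simp add: hform_ac)
qed

lemma line2_rev: assumes "n \<in> NS" "line2 (proj1 n) \<subseteq> X_pts to_ac s c" "p \<in> NS"
  shows "hform_eval id s c (segre p n) = 0"
proof -
  obtain n0 n1 where nn: "n = (n0,n1)" by fastforce
  have "proj3 (segre (ac2 p) (to_ac n0, to_ac n1)) \<in> line2 (proj1 n)"
    unfolding line2_def using proj1_self[of n] NS_nz[OF ac2_NS[OF assms(3)]] nn by blast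
  then have "proj3 (segre (ac2 p) (ac2 n)) \<in> line2 (proj1 n)" using nn by (simp add: ac2_def)
  then have "hform_eval to_ac s c (segre (ac2 p) (ac2 n)) = 0" using assms(2) X_zero by blast
  thus ?thesis by (simp add: hform_ac)
qed

lemma struct_fwd:
  assumes cV: "card {p\<in>NS. \<forall>r\<in>NS. hform_eval id s c (segre p r) = 0} = s"
    and cW: "card {r\<in>NS. \<forall>p\<in>NS. hform_eval id s c (segre p r) = 0} = s"
  shows "X_pts to_ac s c = (\<Union>a\<in>proj1 ` {p\<in>NS. \<forall>r\<in>NS. hform_eval id s c (segre p r) = 0}. line1 a)
     \<union> (\<Union>b\<in>proj1 ` {r\<in>NS. \<forall>p\<in>NS. hform_eval id s c (segre p r) = 0}. line2 b)"
proof -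
  define V where "V = {p\<in>NS. \<forall>r\<in>NS. hform_eval id s c (segre p r) = 0}"
  define W where "W = {r\<in>NS. \<forall>p\<in>NS. hform_eval id s c (segre p r) = 0}"
  have cV': "card V = s" and cW': "card W = s" using cV cW V_def W_def by auto
  have cacV: "card (ac2 ` V) = s" using cV' by (metis card_image ac2_inj inj_on_subset subset_UNIV)
  have cacW: "card (ac2 ` W) = s" using cW' by (metis card_image ac2_inj inj_on_subset subset_UNIV)
  have "X_pts to_ac s c \<subseteq> (\<Union>a\<in>proj1 ` V. line1 a) \<union> (\<Union>b\<in>proj1 ` W. line2 b)"
  proof
    fix x assume "x \<in> X_pts to_ac s c"
    then obtain p r where pr: "p \<in> NS" "r \<in> NS" "hform_eval to_ac s c (segre p r) = 0"
        "x = proj3 (segre p r)"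
      unfolding X_char by auto
    have key: "p \<in> ac2 ` V \<or> r \<in> ac2 ` W"
    proof (rule ccontr)
      assume "\<not> ?thesis"
      then have np: "p \<notin> ac2 ` V" and nr: "r \<notin> ac2 ` W" by auto
      have all: "\<forall>k\<le>s. cf2 to_ac s c r k = 0"
      proof (rule bf_zero[of "insert p (ac2 ` V)"])
        show "insert p (ac2 ` V) \<subseteq> NS" using pr ac2_NS V_def by auto
        show "finite (insert p (ac2 ` V))" by simp
        show "\<forall>x\<in>insert p (ac2 ` V). bform s (cf2 to_ac s c r) x = 0"
          using pr(3) LV unfolding V_def by (auto simp: exp2[symmetric])
        show "s < card (insert p (ac2 ` V))" using np cacV by simp
      qed
      have "\<not> NS \<subseteq> V"
      proof
        assume "NS \<subseteq> V"
        then have "card (NS :: ('a\<times>'a) set) \<le> card V" by (intro card_mono) auto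
        thus False using sNS cV' by simp
      qed
      then obtain a0 where a0: "a0 \<in> NS" "a0 \<notin> V" by blast
      then have "\<exists>r\<in>NS. hform_eval id s c (segre a0 r) \<noteq> 0" unfolding V_def by auto
      from bf_roots[OF LV'[OF this]]
      have Zs: "finite {x\<in>NS. bform s (cf1 to_ac s c (ac2 a0)) x = 0}"
          "card {x\<in>NS. bform s (cf1 to_ac s c (ac2 a0)) x = 0} \<le> s" by auto
      have sub: "insert r (ac2 ` W) \<subseteq> {x\<in>NS. bform s (cf1 to_ac s c (ac2 a0)) x = 0}"
      proof
        fix y assume "y \<in> insert r (ac2 ` W)"
        then show "y \<in> {x\<in>NS. bform s (cf1 to_ac s c (ac2 a0)) x = 0}"
        proof
          assume "y = r"
          have "hform_eval to_ac s c (segre (ac2 a0) r) = 0" unfolding exp2 by (rule bform_zero[OF all])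
          thus ?thesis using \<open>y = r\<close> pr(2) by (simp add: exp1)
        next
          assume "y \<in> ac2 ` W"
          then obtain b where b: "b \<in> W" "y = ac2 b" by blast
          have "hform_eval to_ac s c (segre (ac2 a0) (ac2 b)) = 0" using LW b(1) unfolding W_def by blast
          moreover have "ac2 b \<in> NS" using b(1) ac2_NS unfolding W_def by blast
          ultimately show ?thesis using b(2) by (simp add: exp1)
        qed
      qed
      have "card (insert r (ac2 ` W)) \<le> s" using card_mono[OF Zs(1) sub] Zs(2) by simp
      thus False using nr cacW by simp
    qed
    show "x \<in> (\<Union>a\<in>proj1 ` V. line1 a) \<union> (\<Union>b\<in>proj1 ` W. line2 b)"
      using key
    proof
      assume "p \<in> ac2 ` V"
      then obtain a where a: "a \<in> V" "p = ac2 a" by blast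
      obtain a0 a1 where aa: "a = (a0,a1)" by fastforce
      have "x = proj3 (segre (to_ac a0, to_ac a1) r)" using pr(4) a(2) aa by (simp add: ac2_def)
      then have "x \<in> line1 (proj1 a)" unfolding line1_def
        using aa proj1_self[of a] NS_nz[OF pr(2)] by blast
      thus ?thesis using a(1) by blast
    next
      assume "r \<in> ac2 ` W"
      then obtain b where b: "b \<in> W" "r = ac2 b" by blast
      obtain b0 b1 where bb: "b = (b0,b1)" by fastforce
      have "x = proj3 (segre p (to_ac b0, to_ac b1))" using pr(4) b(2) bb by (simp add: ac2_def)
      then have "x \<in> line2 (proj1 b)" unfolding line2_def
        using bb proj1_self[of b] NS_nz[OF pr(1)] by blast
      thus ?thesis using b(1) by blast
    qed
  qed
  moreover have "(\<Union>a\<in>proj1 ` V. line1 a) \<union> (\<Union>b\<in>proj1 ` W. line2 b) \<subseteq> X_pts to_ac s c"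
    using line1_sub line2_sub unfolding V_def W_def by blast
  ultimately show ?thesis unfolding V_def W_def by blast
qed

lemma main:
  assumes nHS: "\<not> ((H_pts :: 'a alg_closure pt4 set set) \<subseteq> S_pts to_ac s c)"
  shows "int (card (X_pts id s c)) \<le> 2 * int s * (int (card (UNIV :: 'a set)) + 1) - int s ^ 2 \<and>
    (int (card (X_pts id s c)) = 2 * int s * (int (card (UNIV :: 'a set)) + 1) - int s ^ 2 \<longleftrightarrow>
         (\<exists>A B. A \<subseteq> (P1 :: ('a \<times> 'a) set set) \<and> B \<subseteq> P1 \<and> card A = s \<and> card B = s \<and>
            X_pts to_ac s c = (\<Union>a\<in>A. line1 a) \<union> (\<Union>b\<in>B. line2 b)))"
proof -
  define q where "q = card (UNIV :: 'a set)"
  define n where "n = card (NS :: ('a \<times> 'a) set)"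
  have nq: "n = q + 1" unfolding n_def q_def by (rule card_NS)
  define G where "G = (\<lambda>p r. hform_eval id s c (segre p r))"
  define Z where "Z = {(p,r). p\<in>(NS :: ('a \<times> 'a) set) \<and> r\<in>NS \<and> G p r = 0}"
  define Z' where "Z' = {(p,r). p\<in>(NS :: ('a \<times> 'a) set) \<and> r\<in>NS \<and> G r p = 0}"
  define V where "V = {p\<in>(NS :: ('a \<times> 'a) set). \<forall>r\<in>NS. G p r = 0}"
  define W where "W = {r\<in>(NS :: ('a \<times> 'a) set). \<forall>p\<in>NS. G p r = 0}"
  define bd where "bd = s*n + (n-s)*s"
  have cX: "card (X_pts id s c) = card Z" unfolding Z_def G_def by (rule card_X)
  have ca: "card Z \<le> bd \<and> (card Z = bd \<longrightarrow> card V = s)"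
    unfolding Z_def V_def bd_def n_def G_def
    by (rule count_abs[OF NS_finite sNS]) (use PP1 PP2[OF nHS] in auto)
  have ca': "card Z' \<le> bd \<and> (card Z' = bd \<longrightarrow> card W = s)"
    unfolding Z'_def W_def bd_def n_def G_def
    by (rule count_abs[OF NS_finite sNS]) (use PP1' PP2'[OF nHS] in auto)
  have "Z' = prod.swap ` Z" unfolding Z_def Z'_def by auto
  then have cZ': "card Z' = card Z" by (simp add: card_image)
  have sn: "s < q + 1" using sq q_def by simp
  have bdi: "int bd = 2 * int s * (int q + 1) - int s ^ 2" unfolding bd_def nq by (rule bound_int[OF sn])
  have cVle: "card V \<le> s" using PP2[OF nHS] unfolding V_def G_def by simp
  have eqv: "card Z = bd \<longleftrightarrow> (\<exists>A B. A \<subseteq> (P1 :: ('a \<times> 'a) set set) \<and> B \<subseteq> P1 \<and> card A = s \<and> card B = s \<and>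
            X_pts to_ac s c = (\<Union>a\<in>A. line1 a) \<union> (\<Union>b\<in>B. line2 b))"
  proof
    assume e: "card Z = bd"
    then have cV: "card V = s" and cW: "card W = s" using ca ca' cZ' by auto
    have "X_pts to_ac s c = (\<Union>a\<in>proj1 ` V. line1 a) \<union> (\<Union>b\<in>proj1 ` W. line2 b)"
      unfolding V_def W_def G_def by (rule struct_fwd) (use cV cW in \<open>auto simp: V_def W_def G_def\<close>)
    moreover have "proj1 ` V \<subseteq> P1" "proj1 ` W \<subseteq> P1" using NS_P1 unfolding V_def W_def by auto
    moreover have "card (proj1 ` V) = s"
    proof -
      have "inj_on proj1 V" using proj1_inj by (rule inj_on_subset) (auto simp: V_def)
      thus ?thesis using cV card_image by metis
    qed
    moreover have "card (proj1 ` W) = s"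
    proof -
      have "inj_on proj1 W" using proj1_inj by (rule inj_on_subset) (auto simp: W_def)
      thus ?thesis using cW card_image by metis
    qed
    ultimately show "\<exists>A B. A \<subseteq> (P1 :: ('a \<times> 'a) set set) \<and> B \<subseteq> P1 \<and> card A = s \<and> card B = s \<and>
            X_pts to_ac s c = (\<Union>a\<in>A. line1 a) \<union> (\<Union>b\<in>B. line2 b)" by blast
  next
    assume "\<exists>A B. A \<subseteq> (P1 :: ('a \<times> 'a) set set) \<and> B \<subseteq> P1 \<and> card A = s \<and> card B = s \<and>
            X_pts to_ac s c = (\<Union>a\<in>A. line1 a) \<union> (\<Union>b\<in>B. line2 b)"
    then obtain A B where AB: "A \<subseteq> (P1 :: ('a \<times> 'a) set set)" "B \<subseteq> P1" "card A = s" "card B = s"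
        "X_pts to_ac s c = (\<Union>a\<in>A. line1 a) \<union> (\<Union>b\<in>B. line2 b)" by blast
    define VA where "VA = {m\<in>(NS :: ('a \<times> 'a) set). proj1 m \<in> A}"
    define WB where "WB = {m\<in>(NS :: ('a \<times> 'a) set). proj1 m \<in> B}"
    have "proj1 ` VA = A" unfolding VA_def using AB(1) P1_rep by blast
    moreover have "inj_on proj1 VA" using proj1_inj unfolding VA_def by (rule inj_on_subset) auto
    ultimately have cVA: "card VA = s" using AB(3) card_image by metis
    have "proj1 ` WB = B" unfolding WB_def using AB(2) P1_rep by blast
    moreover have "inj_on proj1 WB" using proj1_inj unfolding WB_def by (rule inj_on_subset) auto
    ultimately have cWB: "card WB = s" using AB(4) card_image by metis
    have "VA \<subseteq> V"
    proof
      fix m assume "m \<in> VA"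
      then have m: "m \<in> NS" "line1 (proj1 m) \<subseteq> X_pts to_ac s c" unfolding VA_def using AB(5) by auto
      show "m \<in> V" unfolding V_def G_def using m line1_rev by blast
    qed
    then have "s \<le> card V" using cVA card_mono[of V VA] unfolding V_def by simp
    then have cV: "card V = s" using cVle by simp
    have WBW: "\<forall>r\<in>WB. \<forall>p\<in>NS. G p r = 0"
    proof (intro ballI)
      fix r p :: "'a \<times> 'a" assume "r \<in> WB" "p \<in> NS"
      then have "r \<in> NS" "line2 (proj1 r) \<subseteq> X_pts to_ac s c" unfolding WB_def using AB(5) by auto
      thus "G p r = 0" unfolding G_def using line2_rev \<open>p \<in> NS\<close> by blast
    qed
    have "card V * n + (n - card V) * card WB \<le> card Z"
      unfolding V_def Z_def n_def by (rule count_low[OF NS_finite _ WBW]) (auto simp: WB_def)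
    then have "bd \<le> card Z" unfolding bd_def using cV cWB by (simp add: mult.commute)
    thus "card Z = bd" using ca by simp
  qed
  have "int (card Z) \<le> int bd" using ca by simp
  moreover have "(int (card Z) = int bd) = (card Z = bd)" by simp
  ultimately show ?thesis unfolding cX q_def[symmetric] bdi[symmetric] using eqv by simp
qed

end


theorem corollary2p3:
  fixes c :: "expo \<Rightarrow> 'a::{field,finite}" and s :: nat
  assumes "1 \<le> s" and "s < card (UNIV :: 'a set)"
    and "\<exists>e\<in>mono_exps s. c e \<noteq> 0"
    and "\<not> ((H_pts :: 'a alg_closure pt4 set set) \<subseteq> S_pts to_ac s c)"
  shows "int (card (X_pts id s c)) \<le> 2 * int s * (int (card (UNIV :: 'a set)) + 1) - int s ^ 2 \<and>
    (int (card (X_pts id s c)) = 2 * int s * (int (card (UNIV :: 'a set)) + 1) - int s ^ 2 \<longleftrightarrow>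
         (\<exists>A B. A \<subseteq> (P1 :: ('a \<times> 'a) set set) \<and> B \<subseteq> P1 \<and> card A = s \<and> card B = s \<and>
            X_pts to_ac s c = (\<Union>a\<in>A. line1 a) \<union> (\<Union>b\<in>B. line2 b)))"
    using main[OF assms(2) assms(4)] .

end
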